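(* Let $M,N$ be hyperbolic surfaces with $W_M=W_N$, and let $l\in L_0$. Then $$\bigl|\, l\,P_{\mathrm{odd}} \cap (L_0\setminus\{l\})\,\mathbb{N}^+ \bigr| \le |L_0|-1,$$ i.e. at most $|L_0|-1$ of the numbers $pl$, $p$ an odd prime, are positive integer multiples of an element of $L_0$ other than $l$.
   Context: A hyperbolic surface is a compact Riemannian 2-manifold without boundary of constant curvature $-1$, possibly non-orientable or disconnected; geodesics are oriented closed geodesics. For a geodesic $\gamma$ with length $l(\gamma)$ and imprimitivity index $\nu(\gamma)$, set $\mathrm{wt}(\gamma)=1/\nu(\gamma)$ if $\gamma$ is orientation-preserving and $\mathrm{wt}(\gamma)=\frac1{\nu(\gamma)}\tanh(l(\gamma)/2)$ if orientation-reversing; $W_M(l)=\sum_{l(\gamma)=l}\mathrm{wt}(\gamma)$. Let $\alpha_M(l)$ (resp. $\beta_M(l)$) be the number of primitive orientation-preserving (resp. orientation-reversing) geodesics of $M$ of length exactly $l$; $a(l)=\alpha_M(l)-\alpha_N(l)$, $b(l)=\beta_N(l)-\beta_M(l)$; $L=\{l>0: a(l)\neq0\text{ or }b(l)\neq0\}$; $L_0=\{l\in L: l\text{ is not of the form } kl' \text{ with } l'\in L,\ l'\neq l,\ k\in\mathbb{N}^+\}$. $P_{\mathrm{odd}}$ is the set of odd primes, $lP_{\mathrm{odd}}=\{lp: p\in P_{\mathrm{odd}}\}$, and $(L_0\setminus\{l\})\mathbb{N}^+=\{kl' : l'\in L_0\setminus\{l\},\ k\in\mathbb{N}^+\}$.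 *)

theory Defs
  imports Complex_Main "HOL-Computational_Algebra.Primes"
begin

text \<open>A hyperbolic surface M enters the statement only through its primitive
length-spectrum counts: alpha l (number of primitive orientation-preserving
oriented closed geodesics of length l) and beta l (same, orientation-reversing).\<close>

definition spectral_datum :: "(real \<Rightarrow> nat) \<Rightarrow> (real \<Rightarrow> nat) \<Rightarrow> bool" where
  "spectral_datum \<alpha> \<beta> \<longleftrightarrow>
     (\<forall>l. l \<le> 0 \<longrightarrow> \<alpha> l = 0 \<and> \<beta> l = 0) \<and>
     (\<forall>T. finite {l. l \<le> T \<and> (\<alpha> l \<noteq> 0 \<or> \<beta> l \<noteq> 0)})"

text \<open>W_M(l): every closed geodesic of length l with imprimitivity index k is the
k-th iterate of a unique primitive geodesic of length l/k; it is orientation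
reversing iff the primitive one is and k is odd. Its weight is 1/k, resp.
(1/k) tanh(l/2).\<close>

definition Wfun :: "(real \<Rightarrow> nat) \<Rightarrow> (real \<Rightarrow> nat) \<Rightarrow> real \<Rightarrow> real" where
  "Wfun \<alpha> \<beta> l =
     (\<Sum>k\<in>{k::nat. 1 \<le> k \<and> (\<alpha> (l / real k) \<noteq> 0 \<or> \<beta> (l / real k) \<noteq> 0)}.
        real (\<alpha> (l / real k)) / real k
      + real (\<beta> (l / real k)) * (if odd k then tanh (l / 2) else 1) / real k)"

definition Lset :: "(real \<Rightarrow> nat) \<Rightarrow> (real \<Rightarrow> nat) \<Rightarrow> (real \<Rightarrow> nat) \<Rightarrow> (real \<Rightarrow> nat) \<Rightarrow> real set" where
  "Lset \<alpha>M \<beta>M \<alpha>N \<beta>N =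
     {l. l > 0 \<and> (int (\<alpha>M l) - int (\<alpha>N l) \<noteq> 0 \<or> int (\<beta>N l) - int (\<beta>M l) \<noteq> 0)}"

definition L0set :: "real set \<Rightarrow> real set" where
  "L0set L = {l \<in> L. \<not> (\<exists>l'\<in>L. l' \<noteq> l \<and> (\<exists>k::nat. k \<ge> 1 \<and> l = real k * l'))}"

definition odd_prime_multiples :: "real \<Rightarrow> real set" where
  "odd_prime_multiples l = {l * real p | p::nat. prime p \<and> odd p}"

definition pos_multiples :: "real set \<Rightarrow> real set" where
  "pos_multiples A = {real k * l' | k l'. l' \<in> A \<and> k \<ge> (1::nat)}"

end

theory Submission
  imports Defs
begin

lemma key:
  fixes l l' :: real and p q k k' :: nat
  assumes l: "l > 0" and pq: "prime p" "prime q"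
    and e1: "real p * l = real k * l'" and e2: "real q * l = real k' * l'"
    and nm: "\<not> (\<exists>j::nat. j \<ge> 1 \<and> l = real j * l')"
  shows "p = q"
proof (rule ccontr)
  assume ne: "p \<noteq> q"
  have "real p * real k' * l = real q * real k * l"
    using e1 e2 by (metis mult.commute mult.left_commute)
  hence "real (p * k') = real (q * k)" using l by simp
  hence eq: "p * k' = q * k" by (metis of_nat_eq_iff)
  have "p dvd q * k" by (metis dvd_triv_left eq)
  moreover have "\<not> p dvd q" using pq ne by (metis prime_nat_iff primes_dvd_imp_eq)
  ultimately have "p dvd k" using pq prime_dvd_mult_iff by blast
  then obtain j where kj: "k = p * j" by blast
  have p0: "real p > 0" using pq prime_gt_0_nat by simp
  have "real p * l = real p * (real j * l')" using e1 kj by simp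
  hence lj: "l = real j * l'" using p0 by simp
  have "j \<ge> 1"
  proof (rule ccontr)
    assume "\<not> j \<ge> 1" hence "j = 0" by simp
    thus False using lj l by simp
  qed
  thus False using nm lj by blast
qed

theorem lemma2:
  fixes \<alpha>M \<beta>M \<alpha>N \<beta>N :: "real \<Rightarrow> nat" and l :: real
  assumes "spectral_datum \<alpha>M \<beta>M"
    and "spectral_datum \<alpha>N \<beta>N"
    and "\<forall>x>0. Wfun \<alpha>M \<beta>M x = Wfun \<alpha>N \<beta>N x"
    and "l \<in> L0set (Lset \<alpha>M \<beta>M \<alpha>N \<beta>N)"
  shows "finite (L0set (Lset \<alpha>M \<beta>M \<alpha>N \<beta>N)) \<longrightarrow>
    (finite (odd_prime_multiples l \<inter> pos_multiples (L0set (Lset \<alpha>M \<beta>M \<alpha>N \<beta>N) - {l})) \<and>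
     card (odd_prime_multiples l \<inter> pos_multiples (L0set (Lset \<alpha>M \<beta>M \<alpha>N \<beta>N) - {l}))
       \<le> card (L0set (Lset \<alpha>M \<beta>M \<alpha>N \<beta>N)) - 1)"
proof
  define L where "L = Lset \<alpha>M \<beta>M \<alpha>N \<beta>N"
  define S where "S = odd_prime_multiples l \<inter> pos_multiples (L0set L - {l})"
  assume fin: "finite (L0set (Lset \<alpha>M \<beta>M \<alpha>N \<beta>N))"
  hence fin': "finite (L0set L - {l})" using L_def by simp
  have lL: "l \<in> L0set L" using assms(4) L_def by simp
  have l0: "l > 0" using lL unfolding L0set_def L_def Lset_def by simp
  have uniq: "x = y" if h: "l' \<in> L0set L - {l}" "x \<in> S" "y \<in> S"
      "\<exists>k::nat. k \<ge> 1 \<and> x = real k * l'" "\<exists>k::nat. k \<ge> 1 \<and> y = real k * l'" for l' x y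
  proof -
    obtain p where p: "prime p" "x = l * real p"
      using h(2) unfolding S_def odd_prime_multiples_def by blast
    obtain q where q: "prime q" "y = l * real q"
      using h(3) unfolding S_def odd_prime_multiples_def by blast
    obtain k where k: "x = real k * l'" using h(4) by blast
    obtain k' where k': "y = real k' * l'" using h(5) by blast
    have "l' \<in> L" "l' \<noteq> l" using h(1) unfolding L0set_def by auto
    hence nm: "\<not> (\<exists>j::nat. j \<ge> 1 \<and> l = real j * l')"
      using lL unfolding L0set_def by blast
    have "p = q"
      by (rule key[OF l0 p(1) q(1) _ _ nm, of k k']) (use p q k k' in \<open>simp_all add: mult.commute\<close>)
    thus ?thesis using p q by simp
  qed
  define g where "g l' = (SOME x. x \<in> S \<and> (\<exists>k::nat. k \<ge> 1 \<and> x = real k * l'))" for l'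
  have sub: "S \<subseteq> g ` (L0set L - {l})"
  proof
    fix x assume xS: "x \<in> S"
    then obtain k l' where kl: "x = real k * l'" "l' \<in> L0set L - {l}" "k \<ge> 1"
      unfolding S_def pos_multiples_def by blast
    have "g l' \<in> S \<and> (\<exists>k::nat. k \<ge> 1 \<and> g l' = real k * l')"
      unfolding g_def by (rule someI[of _ x]) (use xS kl in blast)
    hence "g l' = x" using uniq[OF kl(2) _ xS] kl by blast
    thus "x \<in> g ` (L0set L - {l})" using kl(2) by force
  qed
  have "finite S" using sub fin' finite_surj by blast
  moreover have "card S \<le> card (L0set L - {l})"
    using sub fin' by (meson card_image_le card_mono finite_imageI le_trans)
  moreover have "card (L0set L - {l}) = card (L0set L) - 1" using lL by simp
  ultimately show "finite (odd_prime_multiples l \<inter> pos_multiples (L0set (Lset \<alpha>M \<beta>M \<alpha>N \<beta>N) - {l})) \<and>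
     card (odd_prime_multiples l \<inter> pos_multiples (L0set (Lset \<alpha>M \<beta>M \<alpha>N \<beta>N) - {l}))
       \<le> card (L0set (Lset \<alpha>M \<beta>M \<alpha>N \<beta>N)) - 1" using S_def L_def by simp
qed

end
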